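(* Let $c\ge3$ be an integer, let $c'$ be the largest odd integer with $c'\le c$, and let $\mathcal{P}$ be a finite bias distribution. (1) If $E_p[f_{c',x}(p)]=0$ for all $1\le x\le(c'-1)/2$, then $\mathcal{P}$ is $c$-indistinguishable. (2) If $\mathcal{P}$ is $(c'-2)$-indistinguishable and $E_p[f_{c',x_0}(p)]=0$ for at least one $x_0$ with $1\le x_0\le c'-1$, then $\mathcal{P}$ is $c$-indistinguishable. In particular, $\mathcal{P}$ is $c$-indistinguishable if for each odd $\ell$ with $3\le\ell\le c'$ there exists $x_\ell$ with $1\le x_\ell\le\ell-1$ and $E_p[f_{\ell,x_\ell}(p)]=0$.
   Context: A finite bias distribution is a probability distribution $\mathcal{P}$ supported on a finite subset of $(0,1)$ that is symmetric: it outputs $a$ and $1-a$ with the same probability. $E_p$ is expectation over $p\sim\mathcal{P}$. $\sigma(p)=\sqrt{(1-p)/p}$; for integers $\ell\ge1$, $0\le x\le\ell$, $f_{\ell,x}(p)=p^x(1-p)^{\ell-x}(x\sigma(p)-(\ell-x)\sigma(1-p))$ and $R_{\ell,x}=\max\{0,E_p[f_{\ell,x}(p)]\}$. For a positive integer $c$, $\mathcal{P}$ is $c$-indistinguishable if $\sum_{x=1}^{\ell-1}\binom{\ell}{x}R_{\ell,x}=0$ for all $2\le\ell\le c$ (so every such distribution is $1$-indistinguishable). *)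

theory Defs
  imports "HOL-Probability.Probability"
begin

definition finite_bias_dist :: "real pmf \<Rightarrow> bool" where
  "finite_bias_dist P \<longleftrightarrow> finite (set_pmf P) \<and> set_pmf P \<subseteq> {0<..<1}
     \<and> (\<forall>a. pmf P a = pmf P (1 - a))"

definition Ep :: "real pmf \<Rightarrow> (real \<Rightarrow> real) \<Rightarrow> real" where
  "Ep P g = measure_pmf.expectation P g"

definition sigma_b :: "real \<Rightarrow> real" where
  "sigma_b p = sqrt ((1 - p) / p)"

definition f_lx :: "nat \<Rightarrow> nat \<Rightarrow> real \<Rightarrow> real" where
  "f_lx l x p = p ^ x * (1 - p) ^ (l - x) *
      (real x * sigma_b p - real (l - x) * sigma_b (1 - p))"

definition R_lx :: "real pmf \<Rightarrow> nat \<Rightarrow> nat \<Rightarrow> real" where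
  "R_lx P l x = max 0 (Ep P (f_lx l x))"

definition indist :: "nat \<Rightarrow> real pmf \<Rightarrow> bool" where
  "indist c P \<longleftrightarrow> (\<forall>l. 2 \<le> l \<and> l \<le> c \<longrightarrow>
      (\<Sum>x = 1..l - 1. real (l choose x) * R_lx P l x) = 0)"

end

theory Submission
  imports Defs
begin

lemma Ep_sum:
  assumes "finite_bias_dist P"
  shows "Ep P g = (\<Sum>a\<in>set_pmf P. g a * pmf P a)"
  using assms unfolding Ep_def finite_bias_dist_def
  by (intro integral_measure_pmf_real) auto

lemma sig1:
  assumes "0 < p" "p < 1"
  shows "sigma_b p = sqrt (p * (1 - p)) / p"
proof -
  have "(1 - p) / p = (p * (1 - p)) / p\<^sup>2" using assms by (simp add: power2_eq_square)
  then have "sigma_b p = sqrt (p * (1 - p)) / sqrt (p\<^sup>2)"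
    unfolding sigma_b_def by (simp add: real_sqrt_divide)
  then show ?thesis using assms by simp
qed

lemma alg:
  fixes p q s X Y :: real
  assumes "p \<noteq> 0" "q \<noteq> 0"
  shows "p ^ Suc a * q ^ Suc b * (X * (s / p) - Y * (s / q)) = s * (X * p ^ a * q ^ Suc b - Y * p ^ Suc a * q ^ b)"
  using assms by (simp add: power_Suc field_simps)

lemma f_alt:
  assumes "0 < p" "p < 1" "1 \<le> x" "x < l"
  shows "f_lx l x p = sqrt (p * (1 - p)) *
     (real x * p ^ (x - 1) * (1 - p) ^ (l - x) - real (l - x) * p ^ x * (1 - p) ^ (l - x - 1))"
proof -
  have s1: "sigma_b p = sqrt (p * (1 - p)) / p" using sig1 assms by simp
  have "sigma_b (1 - p) = sqrt ((1 - p) * (1 - (1 - p))) / (1 - p)"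
    using sig1[of "1 - p"] assms by simp
  then have s2: "sigma_b (1 - p) = sqrt (p * (1 - p)) / (1 - p)" by (simp add: mult.commute)
  obtain a where a: "x = Suc a" using assms by (cases x) auto
  obtain b where b: "l - x = Suc b" using assms by (cases "l - x") auto
  have "f_lx l x p = p ^ Suc a * (1 - p) ^ Suc b *
      (real x * (sqrt (p * (1 - p)) / p) - real (l - x) * (sqrt (p * (1 - p)) / (1 - p)))"
    unfolding f_lx_def s1 s2 using a b by simp
  also have "\<dots> = sqrt (p * (1 - p)) * (real x * p ^ a * (1 - p) ^ Suc b - real (l - x) * p ^ Suc a * (1 - p) ^ b)"
    by (rule alg) (use assms in auto)
  finally have F: "f_lx l x p = sqrt (p * (1 - p)) * (real x * p ^ a * (1 - p) ^ Suc b - real (l - x) * p ^ Suc a * (1 - p) ^ b)" .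
  have xa: "x - 1 = a" using a by simp
  have lb: "l - x - 1 = b" using b by simp
  show ?thesis using F unfolding xa lb a[symmetric] b[symmetric] .
qed

lemma poly_gen:
  fixes p s A B P Q :: real
  shows "s*((A+1)*P*(Q*(1-p)) - (B+1)*(P*p)*Q) = s*((A+1)*P*(Q*(1-p)*(1-p)) - (B+2)*(P*p)*(Q*(1-p))) + s*((A+2)*(P*p)*(Q*(1-p)) - (B+1)*(P*p*p)*Q)"
  by algebra
lemma poly_id:
  fixes p s :: real
  shows "s*((real a+1)*p^a*(1-p)^(b+1) - (real b+1)*p^(a+1)*(1-p)^b) = s*((real a+1)*p^a*(1-p)^(b+2) - (real b+2)*p^(a+1)*(1-p)^(b+1)) + s*((real a+2)*p^(a+1)*(1-p)^(b+1) - (real b+1)*p^(a+2)*(1-p)^b)"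
proof -
  have e: "p^(a+1) = p^a*p" "p^(a+2) = p^a*p*p" "(1-p)^(b+1) = (1-p)^b*(1-p)" "(1-p)^(b+2) = (1-p)^b*(1-p)*(1-p)"
    by (simp_all add: power_add power2_eq_square mult.assoc)
  show ?thesis unfolding e by (rule poly_gen)
qed
lemma f_rec:
  assumes "0 < p" "p < 1" "1 \<le> x" "x + 1 \<le> l"
  shows "f_lx l x p = f_lx (Suc l) x p + f_lx (Suc l) (Suc x) p"
proof -
  define a where "a = x - 1"
  define b where "b = l - x - 1"
  have ab: "x = a + 1" "l = a + b + 2" using assms unfolding a_def b_def by simp_all
  have h1: "x - 1 = a" "l - x = b + 1" "l - x - 1 = b" "real x = real a + 1" "real (l - x) = real b + 1"
    using ab by simp_all
  have h2: "Suc l - x = b + 2" "Suc l - x - 1 = b + 1" "real (Suc l - x) = real b + 2"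
    using ab by simp_all
  have h3: "Suc x - 1 = a + 1" "Suc l - Suc x = b + 1" "Suc l - Suc x - 1 = b" "real (Suc x) = real a + 2"
     "p ^ Suc x = p ^ (a + 2)" "real (Suc l - Suc x) = real b + 1"
    using ab by simp_all
  have e1: "f_lx l x p = sqrt (p * (1 - p)) *
     ((real a + 1) * p ^ a * (1 - p) ^ (b+1) - (real b + 1) * p ^ (a+1) * (1 - p) ^ b)"
    using f_alt[of p x l] assms ab(1) unfolding h1 by simp
  have e2: "f_lx (Suc l) x p = sqrt (p * (1 - p)) *
     ((real a + 1) * p ^ a * (1 - p) ^ (b+2) - (real b + 2) * p ^ (a+1) * (1 - p) ^ (b+1))"
    using f_alt[of p x "Suc l"] assms ab(1) unfolding h1(1,4) h2 by simp
  have e3: "f_lx (Suc l) (Suc x) p = sqrt (p * (1 - p)) *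
     ((real a + 2) * p ^ (a+1) * (1 - p) ^ (b+1) - (real b + 1) * p ^ (a+2) * (1 - p) ^ b)"
    using f_alt[of p "Suc x" "Suc l"] assms unfolding h3 by simp
  show ?thesis unfolding e1 e2 e3 by (rule poly_id)
qed

lemma f_anti:
  assumes "x \<le> l"
  shows "f_lx l x (1 - p) = - f_lx l (l - x) p"
proof -
  have e: "l - (l - x) = x" using assms by simp
  have g: "a * b * (u - v) = - (b * a * (v - u))" for a b u v :: real
    by (simp add: algebra_simps)
  have h: "1 - (1 - p) = p" by simp
  show ?thesis unfolding f_lx_def e h by (rule g)
qed

lemma set_sym:
  assumes "finite_bias_dist P"
  shows "(\<lambda>a. 1 - a) ` set_pmf P = set_pmf P"
proof -
  have *: "1 - a \<in> set_pmf P" if "a \<in> set_pmf P" for a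
    using assms that unfolding finite_bias_dist_def by (simp add: set_pmf_iff)
  show ?thesis
  proof
    show "(\<lambda>a. 1 - a) ` set_pmf P \<subseteq> set_pmf P" using * by blast
    show "set_pmf P \<subseteq> (\<lambda>a. 1 - a) ` set_pmf P"
    proof
      fix x assume "x \<in> set_pmf P"
      then have "1 - x \<in> set_pmf P" using * by blast
      moreover have "x = 1 - (1 - x)" by simp
      ultimately show "x \<in> (\<lambda>a. 1 - a) ` set_pmf P" by (rule rev_image_eqI)
    qed
  qed
qed

lemma Ep_refl:
  assumes "finite_bias_dist P"
  shows "Ep P (\<lambda>a. g (1 - a)) = Ep P g"
proof -
  have inj: "inj_on (\<lambda>a::real. 1 - a) (set_pmf P)" by (auto simp: inj_on_def)
  have "Ep P g = (\<Sum>a\<in>(\<lambda>a. 1 - a) ` set_pmf P. g a * pmf P a)"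
    using Ep_sum[OF assms] set_sym[OF assms] by simp
  also have "\<dots> = (\<Sum>a\<in>set_pmf P. g (1 - a) * pmf P (1 - a))"
    by (subst sum.reindex[OF inj]) simp
  also have "\<dots> = (\<Sum>a\<in>set_pmf P. g (1 - a) * pmf P a)"
    using assms unfolding finite_bias_dist_def by simp
  finally have "Ep P g = (\<Sum>a\<in>set_pmf P. g (1 - a) * pmf P a)" .
  then show ?thesis by (simp add: Ep_sum[OF assms, of "\<lambda>a. g (1 - a)"])
qed

lemma Ep_anti:
  assumes "finite_bias_dist P" "x \<le> l"
  shows "Ep P (f_lx l x) = - Ep P (f_lx l (l - x))"
proof -
  have "Ep P (f_lx l x) = Ep P (\<lambda>a. f_lx l x (1 - a))"
    using Ep_refl[OF assms(1), of "f_lx l x"] by simp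
  also have "\<dots> = Ep P (\<lambda>a. - f_lx l (l - x) a)"
    using f_anti[OF assms(2)] by simp
  also have "\<dots> = - Ep P (f_lx l (l - x))"
    using Ep_sum[OF assms(1)] by (simp add: sum_negf)
  finally show ?thesis .
qed

lemma Ep_rec:
  assumes "finite_bias_dist P" "1 \<le> x" "x + 1 \<le> l"
  shows "Ep P (f_lx l x) = Ep P (f_lx (Suc l) x) + Ep P (f_lx (Suc l) (Suc x))"
proof -
  have "Ep P (f_lx l x) = (\<Sum>a\<in>set_pmf P. (f_lx (Suc l) x a + f_lx (Suc l) (Suc x) a) * pmf P a)"
    unfolding Ep_sum[OF assms(1)]
  proof (rule sum.cong)
    fix a assume "a \<in> set_pmf P"
    then have "0 < a" "a < 1" using assms(1) unfolding finite_bias_dist_def by auto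
    then show "f_lx l x a * pmf P a = (f_lx (Suc l) x a + f_lx (Suc l) (Suc x) a) * pmf P a"
      using f_rec[of a x l] assms by simp
  qed simp
  then show ?thesis unfolding Ep_sum[OF assms(1)] by (simp add: distrib_right sum.distrib)
qed

definition Z :: "real pmf \<Rightarrow> nat \<Rightarrow> bool" where
  "Z P l \<longleftrightarrow> (\<forall>x. 1 \<le> x \<and> x \<le> l - 1 \<longrightarrow> Ep P (f_lx l x) = 0)"

lemma Z_small: "l \<le> 1 \<Longrightarrow> Z P l"
  unfolding Z_def by auto

lemma Z_down:
  assumes "finite_bias_dist P" "Z P (Suc l)"
  shows "Z P l"
  unfolding Z_def
proof (intro allI impI)
  fix x assume "1 \<le> x \<and> x \<le> l - 1"
  then show "Ep P (f_lx l x) = 0"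
    using Ep_rec[OF assms(1), of x l] assms(2) unfolding Z_def by auto
qed

lemma Z_le:
  assumes "finite_bias_dist P" "Z P c" "l \<le> c"
  shows "Z P l"
proof -
  have "Z P (l + k) \<Longrightarrow> Z P l" for k
  proof (induction k)
    case 0 then show ?case by simp
  next
    case (Suc k)
    have "Z P (Suc (l + k))" using Suc.prems by simp
    then have "Z P (l + k)" by (rule Z_down[OF assms(1)])
    then show ?case using Suc.IH by simp
  qed
  moreover have "l + (c - l) = c" using assms(3) by simp
  ultimately show ?thesis using assms(2) by metis
qed

lemma Z_up:
  assumes P: "finite_bias_dist P" and Zl: "Z P l" and x0: "1 \<le> x0" "x0 \<le> l"
    and g0: "Ep P (f_lx (Suc l) x0) = 0"
  shows "Z P (Suc l)"
proof -
  define g where "g x = Ep P (f_lx (Suc l) x)" for x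
  have rel: "g x + g (Suc x) = 0" if "1 \<le> x" "x + 1 \<le> l" for x
    using Ep_rec[OF P that] Zl that unfolding Z_def g_def by auto
  have up: "g (x0 + k) = 0" if "x0 + k \<le> l" for k
    using that
  proof (induction k)
    case 0 then show ?case using g0 g_def by simp
  next
    case (Suc k)
    then show ?case using rel[of "x0 + k"] x0 by simp
  qed
  have down: "g (x0 - k) = 0" if "k < x0" for k
    using that
  proof (induction k)
    case 0 then show ?case using g0 g_def by simp
  next
    case (Suc k)
    then have "g (x0 - Suc k) + g (Suc (x0 - Suc k)) = 0"
      using rel[of "x0 - Suc k"] x0 by simp
    moreover have "Suc (x0 - Suc k) = x0 - k" using Suc by simp
    ultimately show ?case using Suc by simp
  qed
  show ?thesis unfolding Z_def
  proof (intro allI impI)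
    fix x assume x: "1 \<le> x \<and> x \<le> Suc l - 1"
    show "Ep P (f_lx (Suc l) x) = 0"
    proof (cases "x0 \<le> x")
      case True
      then show ?thesis using up[of "x - x0"] x unfolding g_def by simp
    next
      case False
      then show ?thesis using down[of "x0 - x"] x unfolding g_def by simp
    qed
  qed
qed

lemma Z_even:
  assumes P: "finite_bias_dist P" and "1 \<le> m" and "Z P (2 * m - 1)"
  shows "Z P (2 * m)"
proof -
  have e: "Suc (2 * m - 1) = 2 * m" using assms by simp
  have "Ep P (f_lx (2*m) m) = - Ep P (f_lx (2*m) (2*m - m))"
    using Ep_anti[OF P, of m "2*m"] by simp
  then have "Ep P (f_lx (Suc (2 * m - 1)) m) = 0" unfolding e by simp
  from Z_up[OF P assms(3) _ _ this] assms show ?thesis unfolding e by simp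
qed

lemma indist_iff:
  assumes P: "finite_bias_dist P"
  shows "indist c P \<longleftrightarrow> (\<forall>l. 2 \<le> l \<and> l \<le> c \<longrightarrow> Z P l)"
proof -
  have key: "(\<Sum>x = 1..l - 1. real (l choose x) * R_lx P l x) = 0 \<longleftrightarrow> Z P l" for l
  proof
    assume s: "(\<Sum>x = 1..l - 1. real (l choose x) * R_lx P l x) = 0"
    have nn: "0 \<le> real (l choose x) * R_lx P l x" if "x \<in> {1..l-1}" for x
      unfolding R_lx_def by simp
    have each: "real (l choose x) * R_lx P l x = 0" if "x \<in> {1..l-1}" for x
    proof -
      have "\<forall>x\<in>{1..l-1}. real (l choose x) * R_lx P l x = 0"
        using iffD1[OF sum_nonneg_eq_0_iff[OF finite_atLeastAtMost nn] s] .
      then show ?thesis using that by blast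
    qed
    have le: "Ep P (f_lx l x) \<le> 0" if "x \<in> {1..l-1}" for x
    proof -
      have "x \<le> l" using that by auto
      then have "l choose x > 0" by simp
      then have "R_lx P l x = 0" using each[OF that] by simp
      then show ?thesis unfolding R_lx_def by simp
    qed
    show "Z P l" unfolding Z_def
    proof (intro allI impI)
      fix x assume x: "1 \<le> x \<and> x \<le> l - 1"
      then have "l - x \<in> {1..l-1}" by auto
      then have "Ep P (f_lx l (l - x)) \<le> 0" by (rule le)
      moreover have "Ep P (f_lx l x) \<le> 0" using le x by simp
      moreover have "Ep P (f_lx l x) = - Ep P (f_lx l (l - x))"
        using Ep_anti[OF P, of x l] x by arith
      ultimately show "Ep P (f_lx l x) = 0" by simp
    qed
  next
    assume "Z P l"
    then show "(\<Sum>x = 1..l - 1. real (l choose x) * R_lx P l x) = 0"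
      unfolding Z_def R_lx_def by (intro sum.neutral) auto
  qed
  show ?thesis unfolding indist_def key ..
qed

theorem proposition5:
  fixes c c' :: nat and P :: "real pmf"
  assumes "c \<ge> 3"
    and "c' = (if odd c then c else c - 1)"
    and "finite_bias_dist P"
  shows "((\<forall>x. 1 \<le> x \<and> x \<le> (c' - 1) div 2 \<longrightarrow> Ep P (f_lx c' x) = 0) \<longrightarrow> indist c P)
       \<and> ((indist (c' - 2) P \<and> (\<exists>x0. 1 \<le> x0 \<and> x0 \<le> c' - 1 \<and> Ep P (f_lx c' x0) = 0))
            \<longrightarrow> indist c P)
       \<and> ((\<forall>l. odd l \<and> 3 \<le> l \<and> l \<le> c' \<longrightarrow>
              (\<exists>xl. 1 \<le> xl \<and> xl \<le> l - 1 \<and> Ep P (f_lx l xl) = 0)) \<longrightarrow> indist c P)"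
proof -
  note P = assms(3)
  have oc: "odd c' \<and> 3 \<le> c' \<and> (c = c' \<or> c = c' + 1)"
  proof (cases "odd c")
    case True then show ?thesis using assms(1,2) by simp
  next
    case False then show ?thesis using assms(1,2) by presburger
  qed
  define k where "k = c' div 2"
  have k: "c' = 2 * k + 1" "1 \<le> k" using oc unfolding k_def by presburger+
  have cc: "c = c' \<or> c = c' + 1" using oc by simp
  have fin: "indist c P" if Zc': "Z P c'"
  proof -
    have Zc: "Z P c"
    proof (cases "c = c'")
      case True then show ?thesis using Zc' by simp
    next
      case False
      then have "c = 2 * (k + 1)" using cc k by simp
      moreover have "Z P (2 * (k + 1) - 1)" using Zc' k by simp
      ultimately show ?thesis using Z_even[OF P, of "k + 1"] by simp
    qed
    show ?thesis unfolding indist_iff[OF P] using Z_le[OF P Zc] by blast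
  qed
  have p1: "indist c P" if h: "\<forall>x. 1 \<le> x \<and> x \<le> (c' - 1) div 2 \<longrightarrow> Ep P (f_lx c' x) = 0"
  proof -
    have "Z P c'" unfolding Z_def
    proof (intro allI impI)
      fix x assume x: "1 \<le> x \<and> x \<le> c' - 1"
      show "Ep P (f_lx c' x) = 0"
      proof (cases "x \<le> (c' - 1) div 2")
        case True then show ?thesis using h x by simp
      next
        case False
        have e: "(c' - 1) div 2 = k" using k by simp
        have "\<not> x \<le> k" using False e by simp
        then have "1 \<le> c' - x \<and> c' - x \<le> k" using x k by arith
        then have "1 \<le> c' - x \<and> c' - x \<le> (c' - 1) div 2" using e by simp
        then have "Ep P (f_lx c' (c' - x)) = 0" using h by simp
        moreover have "x \<le> c'" using x by arith
        ultimately show ?thesis using Ep_anti[OF P, of x c'] by simp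
      qed
    qed
    then show ?thesis by (rule fin)
  qed
  have p2: "indist c P" if h1: "indist (c' - 2) P"
    and h2: "\<exists>x0. 1 \<le> x0 \<and> x0 \<le> c' - 1 \<and> Ep P (f_lx c' x0) = 0"
  proof -
    have Z1: "Z P (2 * k - 1)"
    proof (cases "2 * k - 1 \<le> 1")
      case True then show ?thesis by (rule Z_small)
    next
      case False
      then have "2 \<le> 2 * k - 1 \<and> 2 * k - 1 \<le> c' - 2" using k by simp
      then show ?thesis using h1 unfolding indist_iff[OF P] by blast
    qed
    have Z2: "Z P (2 * k)" by (rule Z_even[OF P k(2) Z1])
    obtain x0 where x0: "1 \<le> x0" "x0 \<le> c' - 1" "Ep P (f_lx c' x0) = 0" using h2 by blast
    have "Z P (Suc (2 * k))" using Z_up[OF P Z2 x0(1)] x0 k by simp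
    then show ?thesis using fin k by simp
  qed
  have p3: "indist c P" if h: "\<forall>l. odd l \<and> 3 \<le> l \<and> l \<le> c' \<longrightarrow>
              (\<exists>xl. 1 \<le> xl \<and> xl \<le> l - 1 \<and> Ep P (f_lx l xl) = 0)"
  proof -
    have "l \<le> c' \<Longrightarrow> Z P l" for l
    proof (induction l)
      case 0 then show ?case by (simp add: Z_small)
    next
      case (Suc l)
      then have Zl: "Z P l" by simp
      show ?case
      proof (cases "l = 0")
        case True then show ?thesis by (simp add: Z_small)
      next
        case l0: False
        show ?thesis
        proof (cases "odd l")
          case True
          then obtain m where m: "l = 2 * m + 1" by (auto elim: oddE)
          have "Z P (2 * (m + 1))"
            using Z_even[OF P, of "m + 1"] Zl m by simp
          then show ?thesis using m by simp
        next
          case False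
          then have "odd (Suc l) \<and> 3 \<le> Suc l \<and> Suc l \<le> c'" using Suc.prems l0 by presburger
          then have "\<exists>xl. 1 \<le> xl \<and> xl \<le> Suc l - 1 \<and> Ep P (f_lx (Suc l) xl) = 0"
            using h by blast
          then obtain xl where xl: "1 \<le> xl" "xl \<le> l" "Ep P (f_lx (Suc l) xl) = 0"
            by auto
          show ?thesis by (rule Z_up[OF P Zl xl])
        qed
      qed
    qed
    then show ?thesis using fin by simp
  qed
  show ?thesis using p1 p2 p3 by blast
qed

end
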